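(* Let $q$ be an indeterminate, $T(x)=A(x)+qD(x)=\sum_iT^{(i)}x^i$ and $T'(x)=A'(x)+qD'(x)=\sum_iT'^{(i)}x^i$, acting on $\mathbb{V}_N[q]$. Then $T^{(i)}T^{(j)}=T^{(j)}T^{(i)}$ and $T'^{(i)}T'^{(j)}=T'^{(j)}T'^{(i)}$ for all $i,j\ge0$.
   Context: Fix $N\ge2$. $V=\mathbb{C}^2$ with basis $v_0,v_1$, ${\bf P}=\mathbb{C}[t_1,\dots,t_N]$, $\mathbb{V}_N=V^{\otimes N}\otimes{\bf P}$. With matrices on $V\otimes V$ in the ordered basis $v_0\otimes v_0,v_0\otimes v_1,v_1\otimes v_0,v_1\otimes v_1$ (columns = images), $L(x,t)=\begin{pmatrix}1&0&0&0\\0&x+t&1&0\\0&1&0&0\\0&0&0&1\end{pmatrix}$, $L'(x,t)=\begin{pmatrix}x-t&0&0&0\\0&1&1&0\\0&1&1&0\\0&0&0&0\end{pmatrix}$. On $V[x]\otimes\mathbb{V}_N$ (factors $0,\dots,N$) let $M(x)=L_{0N}(x,t_N)\cdots L_{01}(x,t_1)$ with $L_{0j}(x,t_j)$ acting on factors $0,j$ (factor $0$ first). Define $A(x),B(x),C(x),D(x)$ by $M(x)(v_0\otimes w)=v_0\otimes A(x)w+v_1\otimes C(x)w$, $M(x)(v_1\otimes w)=v_0\otimes B(x)w+v_1\otimes D(x)w$; $A'(x),\dots,D'(x)$ are defined in the same way from $L'$. *)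

theory Defs
  imports "Jordan_Normal_Form.Matrix" "HOL-Computational_Algebra.Polynomial"
begin

text \<open>Basis of V = C^2: v_0 is False, v_1 is True.  The ordered basis of V (x) V
  v0v0, v0v1, v1v0, v1v1 is indexed by 0,1,2,3 (first factor = auxiliary space 0).\<close>

definition idx2 :: "bool \<Rightarrow> bool \<Rightarrow> nat" where
  "idx2 a c = 2 * of_bool a + of_bool c"

text \<open>The R-matrices as 4x4 matrices with entries polynomial in x (columns = images).
  The spectral parameter x is the polynomial variable; t is a scalar (constant polynomial).\<close>

definition L_mat :: "'a::comm_ring_1 \<Rightarrow> 'a poly mat" where
  "L_mat t = mat_of_rows_list 4
     [[1, 0, 0, 0],
      [0, [:0,1:] + [:t:], 1, 0],
      [0, 1, 0, 0],
      [0, 0, 0, 1]]"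

definition L'_mat :: "'a::comm_ring_1 \<Rightarrow> 'a poly mat" where
  "L'_mat t = mat_of_rows_list 4
     [[[:0,1:] - [:t:], 0, 0, 0],
      [0, 1, 1, 0],
      [0, 1, 1, 0],
      [0, 0, 0, 0]]"

text \<open>Matrix entry of the monodromy  M(x) = L_{0N}(x,t_N) ... L_{01}(x,t_1):
  mono R ts a cs b ds = coefficient of  v_a (x) v_cs  in  M(x)(v_b (x) v_ds),
  where ts = [t_1,...,t_N] and cs, ds are bool lists [s_1,...,s_N].
  L_{01} is applied first, then the remaining product acts on the new auxiliary state.\<close>

fun mono :: "('a::comm_ring_1 \<Rightarrow> 'a poly mat) \<Rightarrow> 'a list \<Rightarrow> bool \<Rightarrow> bool list \<Rightarrow> bool \<Rightarrow> bool list \<Rightarrow> 'a poly" where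
  "mono R [] a [] b [] = (if a = b then 1 else 0)"
| "mono R (t # ts) a (c # cs) b (d # ds) =
     (\<Sum>e\<in>(UNIV::bool set). mono R ts a cs e ds * (R t $$ (idx2 e c, idx2 b d)))"
| "mono R _ _ _ _ _ = 0"

text \<open>Basis of V^{(x)N}: index k < 2^N corresponds to v_{s_1} (x) ... (x) v_{s_N}
  with s_j = bit (j-1) of k.\<close>

definition state :: "nat \<Rightarrow> nat \<Rightarrow> bool list" where
  "state N k = map (\<lambda>j. bit k j) [0..<N]"

text \<open>The operators A(x), D(x) (from L) as 2^N x 2^N matrices over 'a[x]:
  M(x)(v_0 (x) w) = v_0 (x) A(x) w + ...,  M(x)(v_1 (x) w) = ... + v_1 (x) D(x) w.\<close>

definition opA :: "('a::comm_ring_1 \<Rightarrow> 'a poly mat) \<Rightarrow> 'a list \<Rightarrow> 'a poly mat" where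
  "opA R ts = mat (2 ^ length ts) (2 ^ length ts)
     (\<lambda>(r, c). mono R ts False (state (length ts) r) False (state (length ts) c))"

definition opD :: "('a::comm_ring_1 \<Rightarrow> 'a poly mat) \<Rightarrow> 'a list \<Rightarrow> 'a poly mat" where
  "opD R ts = mat (2 ^ length ts) (2 ^ length ts)
     (\<lambda>(r, c). mono R ts True (state (length ts) r) True (state (length ts) c))"

definition transfer :: "('a::comm_ring_1 \<Rightarrow> 'a poly mat) \<Rightarrow> 'a \<Rightarrow> 'a list \<Rightarrow> 'a poly mat" where
  "transfer R q ts = opA R ts + [:q:] \<cdot>\<^sub>m opD R ts"

definition transfer_coeff :: "('a::comm_ring_1 \<Rightarrow> 'a poly mat) \<Rightarrow> 'a \<Rightarrow> 'a list \<Rightarrow> nat \<Rightarrow> 'a mat" where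
  "transfer_coeff R q ts i = map_mat (\<lambda>p. coeff p i) (transfer R q ts)"

end

theory Submission
  imports Defs
begin


fun lsum :: "nat \<Rightarrow> (bool list \<Rightarrow> 'b::comm_monoid_add) \<Rightarrow> 'b" where
  "lsum 0 g = g []"
| "lsum (Suc n) g = (\<Sum>m\<in>(UNIV::bool set). lsum n (\<lambda>l. g (m # l)))"

lemma lsum_sum: "finite A \<Longrightarrow> lsum n (\<lambda>l. \<Sum>i\<in>A. f i l) = (\<Sum>i\<in>A. lsum n (f i))"
proof (induction n arbitrary: f)
  case 0 then show ?case by simp
next
  case (Suc n)
  have "lsum (Suc n) (\<lambda>l. \<Sum>i\<in>A. f i l) = (\<Sum>m\<in>UNIV. \<Sum>i\<in>A. lsum n (\<lambda>l. f i (m # l)))"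
    using Suc by simp
  also have "\<dots> = (\<Sum>i\<in>A. lsum (Suc n) (f i))" by (simp add: sum.swap[of _ UNIV])
  finally show ?case .
qed

lemma lsum_mult_left: "lsum n (\<lambda>l. (c::'b::comm_ring_1) * f l) = c * lsum n f"
  by (induction n arbitrary: f) (simp_all add: sum_distrib_left)

lemma lsum_mult_right: "lsum n (\<lambda>l. f l * (c::'b::comm_ring_1)) = lsum n f * c"
  by (induction n arbitrary: f) (simp_all add: sum_distrib_right)

lemma lsum_add: "lsum n (\<lambda>l. f l + g l) = lsum n f + lsum n g"
  by (induction n arbitrary: f g) (simp_all add: sum.distrib)

lemma lsum_cong: "(\<And>l. length l = n \<Longrightarrow> f l = g l) \<Longrightarrow> lsum n f = lsum n g"
proof (induction n arbitrary: f g)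
  case 0 then show ?case by simp
next
  case (Suc n)
  show ?case by simp (rule sum.cong, simp, rule Suc.IH, simp add: Suc.prems)
qed

fun gm :: "('s \<Rightarrow> 's \<Rightarrow> bool \<Rightarrow> bool \<Rightarrow> bool \<Rightarrow> bool \<Rightarrow> 's::comm_ring_1) \<Rightarrow> 's \<Rightarrow> 's list \<Rightarrow> bool \<Rightarrow> bool list \<Rightarrow> bool \<Rightarrow> bool list \<Rightarrow> 's" where
  "gm w x [] a [] b [] = (if a = b then 1 else 0)"
| "gm w x (t # ts) a (c # cs) b (d # ds) =
     (\<Sum>e\<in>(UNIV::bool set). gm w x ts a cs e ds * w x t e c b d)"
| "gm w x _ _ _ _ _ = 0"

definition G2 where
  "G2 w x y ts a b cs a' b' ds = lsum (length ts) (\<lambda>ms. gm w x ts a cs a' ms * gm w y ts b ms b' ds)"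
definition H2 where
  "H2 w x y ts a b cs a' b' ds = lsum (length ts) (\<lambda>ms. gm w y ts b cs b' ms * gm w x ts a ms a' ds)"
definition ell where
  "ell w x y t e f c a' b' d = (\<Sum>m\<in>(UNIV::bool set). w x t e c a' m * w y t f m b' d)"
definition ell' where
  "ell' w x y t e f c a' b' d = (\<Sum>m\<in>(UNIV::bool set). w y t f c b' m * w x t e m a' d)"

lemma G2_Cons: "G2 w x y (t#ts) a b (c#cs) a' b' (d#ds) =
   (\<Sum>e\<in>UNIV. \<Sum>f\<in>UNIV. G2 w x y ts a b cs e f ds * ell w x y t e f c a' b' d)"
proof -
  let ?n = "length ts"
  have "G2 w x y (t#ts) a b (c#cs) a' b' (d#ds) = (\<Sum>m\<in>UNIV. lsum ?n (\<lambda>l.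
     (\<Sum>e\<in>UNIV. gm w x ts a cs e l * w x t e c a' m) * (\<Sum>f\<in>UNIV. gm w y ts b l f ds * w y t f m b' d)))"
    by (simp add: G2_def)
  also have "\<dots> = (\<Sum>m\<in>UNIV. lsum ?n (\<lambda>l. \<Sum>e\<in>UNIV. \<Sum>f\<in>UNIV.
     (gm w x ts a cs e l * gm w y ts b l f ds) * (w x t e c a' m * w y t f m b' d)))"
    by (simp add: sum_product mult_ac)
  also have "\<dots> = (\<Sum>m\<in>UNIV. \<Sum>e\<in>UNIV. \<Sum>f\<in>UNIV.
     G2 w x y ts a b cs e f ds * (w x t e c a' m * w y t f m b' d))"
    by (simp add: lsum_sum lsum_mult_right G2_def)
  also have "\<dots> = (\<Sum>e\<in>UNIV. \<Sum>f\<in>UNIV. G2 w x y ts a b cs e f ds * ell w x y t e f c a' b' d)"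
    unfolding ell_def sum_distrib_left
    by (subst sum.swap, rule sum.cong, simp, subst sum.swap, simp)
  finally show ?thesis .
qed

lemma H2_Cons: "H2 w x y (t#ts) a b (c#cs) a' b' (d#ds) =
   (\<Sum>e\<in>UNIV. \<Sum>f\<in>UNIV. H2 w x y ts a b cs e f ds * ell' w x y t e f c a' b' d)"
proof -
  let ?n = "length ts"
  have "H2 w x y (t#ts) a b (c#cs) a' b' (d#ds) = (\<Sum>m\<in>UNIV. lsum ?n (\<lambda>l.
     (\<Sum>f\<in>UNIV. gm w y ts b cs f l * w y t f c b' m) * (\<Sum>e\<in>UNIV. gm w x ts a l e ds * w x t e m a' d)))"
    by (simp add: H2_def)
  also have "\<dots> = (\<Sum>m\<in>UNIV. lsum ?n (\<lambda>l. \<Sum>e\<in>UNIV. \<Sum>f\<in>UNIV.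
     (gm w y ts b cs f l * gm w x ts a l e ds) * (w y t f c b' m * w x t e m a' d)))"
    by (subst sum_product, subst sum.swap, simp add: sum_product mult_ac)
  also have "\<dots> = (\<Sum>m\<in>UNIV. \<Sum>e\<in>UNIV. \<Sum>f\<in>UNIV.
     H2 w x y ts a b cs e f ds * (w y t f c b' m * w x t e m a' d))"
    by (simp add: lsum_sum lsum_mult_right H2_def)
  also have "\<dots> = (\<Sum>e\<in>UNIV. \<Sum>f\<in>UNIV. H2 w x y ts a b cs e f ds * ell' w x y t e f c a' b' d)"
    unfolding ell'_def sum_distrib_left
    by (subst sum.swap, rule sum.cong, simp, subst sum.swap, simp)
  finally show ?thesis .
qed

lemma gm_len: "length cs \<noteq> length ts \<or> length ds \<noteq> length ts \<Longrightarrow> gm w x ts a cs b ds = 0"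
  by (induction w x ts a cs b ds rule: gm.induct) auto

lemma exchange:
  assumes loc: "\<And>t e f c a' b' d. (\<Sum>e2\<in>UNIV. \<Sum>f2\<in>UNIV. R e f e2 f2 * ell w x y t e2 f2 c a' b' d)
      = (\<Sum>e2\<in>UNIV. \<Sum>f2\<in>UNIV. ell' w x y t e f c e2 f2 d * R e2 f2 a' b')"
  shows "length cs = length ts \<Longrightarrow> length ds = length ts \<Longrightarrow>
    (\<Sum>a2\<in>UNIV. \<Sum>b2\<in>UNIV. R a b a2 b2 * G2 w x y ts a2 b2 cs a' b' ds)
    = (\<Sum>a2\<in>UNIV. \<Sum>b2\<in>UNIV. H2 w x y ts a b cs a2 b2 ds * R a2 b2 a' b')"
proof (induction ts arbitrary: cs ds a b a' b')
  case Nil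
  then show ?case by (simp add: G2_def H2_def UNIV_bool)
next
  case (Cons t ts)
  obtain c cs' where cs: "cs = c # cs'" "length cs' = length ts" using Cons.prems by (cases cs) auto
  obtain d ds' where ds: "ds = d # ds'" "length ds' = length ts" using Cons.prems by (cases ds) auto
  have "(\<Sum>a2\<in>UNIV. \<Sum>b2\<in>UNIV. R a b a2 b2 * G2 w x y (t#ts) a2 b2 cs a' b' ds)
     = (\<Sum>e\<in>UNIV. \<Sum>f\<in>UNIV. (\<Sum>a2\<in>UNIV. \<Sum>b2\<in>UNIV. R a b a2 b2 * G2 w x y ts a2 b2 cs' e f ds') * ell w x y t e f c a' b' d)"
    unfolding cs ds G2_Cons sum_distrib_left sum_distrib_right
    by (simp add: UNIV_bool algebra_simps)
  also have "\<dots> = (\<Sum>e\<in>UNIV. \<Sum>f\<in>UNIV. (\<Sum>a2\<in>UNIV. \<Sum>b2\<in>UNIV. H2 w x y ts a b cs' a2 b2 ds' * R a2 b2 e f) * ell w x y t e f c a' b' d)"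
    using Cons.IH[OF cs(2) ds(2)] by simp
  also have "\<dots> = (\<Sum>a2\<in>UNIV. \<Sum>b2\<in>UNIV. H2 w x y ts a b cs' a2 b2 ds' * (\<Sum>e\<in>UNIV. \<Sum>f\<in>UNIV. R a2 b2 e f * ell w x y t e f c a' b' d))"
    unfolding sum_distrib_left sum_distrib_right
    by (simp add: UNIV_bool algebra_simps)
  also have "\<dots> = (\<Sum>a2\<in>UNIV. \<Sum>b2\<in>UNIV. H2 w x y ts a b cs' a2 b2 ds' * (\<Sum>e\<in>UNIV. \<Sum>f\<in>UNIV. ell' w x y t a2 b2 c e f d * R e f a' b'))"
    by (simp add: loc)
  also have "\<dots> = (\<Sum>e\<in>UNIV. \<Sum>f\<in>UNIV. H2 w x y (t#ts) a b cs e f ds * R e f a' b')"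
    unfolding cs ds H2_Cons sum_distrib_left sum_distrib_right
    by (simp add: UNIV_bool algebra_simps)
  finally show ?case .
qed

definition wL :: "'s::comm_ring_1 \<Rightarrow> 's \<Rightarrow> bool \<Rightarrow> bool \<Rightarrow> bool \<Rightarrow> bool \<Rightarrow> 's" where
  "wL x t e c b d = (let i = idx2 e c; j = idx2 b d in
     if i = 0 \<and> j = 0 then 1 else if i = 1 \<and> j = 1 then x + t else if i = 1 \<and> j = 2 then 1
     else if i = 2 \<and> j = 1 then 1 else if i = 3 \<and> j = 3 then 1 else 0)"

definition wL' :: "'s::comm_ring_1 \<Rightarrow> 's \<Rightarrow> bool \<Rightarrow> bool \<Rightarrow> bool \<Rightarrow> bool \<Rightarrow> 's" where
  "wL' x t e c b d = (let i = idx2 e c; j = idx2 b d in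
     if i = 0 \<and> j = 0 then x - t else if i \<in> {1,2} \<and> j \<in> {1,2} then 1 else 0)"

definition RL :: "'s::comm_ring_1 \<Rightarrow> 's \<Rightarrow> bool \<Rightarrow> bool \<Rightarrow> bool \<Rightarrow> bool \<Rightarrow> 's" where
  "RL x y a b a2 b2 = (let i = idx2 a b; j = idx2 a2 b2 in
     if i = 0 \<and> j = 0 then 1 else if i = 1 \<and> j = 1 then x - y else if i = 1 \<and> j = 2 then 1
     else if i = 2 \<and> j = 1 then 1 else if i = 3 \<and> j = 3 then 1 else 0)"

definition RL' :: "'s::comm_ring_1 \<Rightarrow> 's \<Rightarrow> bool \<Rightarrow> bool \<Rightarrow> bool \<Rightarrow> bool \<Rightarrow> 's" where
  "RL' x y a b a2 b2 = (let i = idx2 a b; j = idx2 a2 b2 in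
     if i = 0 \<and> j = 0 then 1 else if i = 1 \<and> j = 2 then 1
     else if i = 2 \<and> j = 1 then 1 else if i = 2 \<and> j = 2 then y - x else if i = 3 \<and> j = 3 then 1 else 0)"

lemma locL: "(\<Sum>e2\<in>UNIV. \<Sum>f2\<in>UNIV. RL x y e f e2 f2 * ell wL x y t e2 f2 c a' b' d)
      = (\<Sum>e2\<in>UNIV. \<Sum>f2\<in>UNIV. ell' wL x y t e f c e2 f2 d * RL x y e2 f2 a' b')"
  by (cases e; cases f; cases c; cases a'; cases b'; cases d)
     (simp_all add: ell_def ell'_def UNIV_bool idx2_def wL_def RL_def algebra_simps)

lemma locL': "(\<Sum>e2\<in>UNIV. \<Sum>f2\<in>UNIV. RL' x y e f e2 f2 * ell wL' x y t e2 f2 c a' b' d)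
      = (\<Sum>e2\<in>UNIV. \<Sum>f2\<in>UNIV. ell' wL' x y t e f c e2 f2 d * RL' x y e2 f2 a' b')"
  by (cases e; cases f; cases c; cases a'; cases b'; cases d)
     (simp_all add: ell_def ell'_def UNIV_bool idx2_def wL'_def RL'_def algebra_simps)

definition TT where
  "TT w q x ts cs ds = gm w x ts False cs False ds + q * gm w x ts True cs True ds"

lemma TT_G2: "lsum (length ts) (\<lambda>ms. TT w q x ts cs ms * TT w q y ts ms ds) =
  G2 w x y ts False False cs False False ds + q * G2 w x y ts False True cs False True ds
  + q * G2 w x y ts True False cs True False ds + q * q * G2 w x y ts True True cs True True ds"
proof -
  have "lsum (length ts) (\<lambda>ms. TT w q x ts cs ms * TT w q y ts ms ds) = lsum (length ts) (\<lambda>ms.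
     gm w x ts False cs False ms * gm w y ts False ms False ds
     + q * (gm w x ts False cs False ms * gm w y ts True ms True ds)
     + q * (gm w x ts True cs True ms * gm w y ts False ms False ds)
     + q * q * (gm w x ts True cs True ms * gm w y ts True ms True ds))"
    by (rule lsum_cong) (simp add: TT_def algebra_simps)
  then show ?thesis by (simp add: lsum_add lsum_mult_left G2_def)
qed

lemma TT_H2: "lsum (length ts) (\<lambda>ms. TT w q y ts cs ms * TT w q x ts ms ds) =
  H2 w x y ts False False cs False False ds + q * H2 w x y ts False True cs False True ds
  + q * H2 w x y ts True False cs True False ds + q * q * H2 w x y ts True True cs True True ds"
proof -
  have "lsum (length ts) (\<lambda>ms. TT w q y ts cs ms * TT w q x ts ms ds) = lsum (length ts) (\<lambda>ms.
     gm w y ts False cs False ms * gm w x ts False ms False ds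
     + q * (gm w y ts True cs True ms * gm w x ts False ms False ds)
     + q * (gm w y ts False cs False ms * gm w x ts True ms True ds)
     + q * q * (gm w y ts True cs True ms * gm w x ts True ms True ds))"
    by (rule lsum_cong) (simp add: TT_def algebra_simps)
  then show ?thesis by (simp add: lsum_add lsum_mult_left H2_def)
qed

lemma comboL:
  fixes A B C B' d g h :: "'s::comm_ring_1"
  assumes "A = d*h + B'" "d*g + B = C" "g = h" shows "A + B = C + B'"
proof -
  have "B = C - d*g" using assms(2) by (simp add: eq_diff_eq add.commute)
  then show ?thesis using assms(1,3) by (simp add: algebra_simps)
qed

lemma comboL':
  fixes A B C1 C2 d g h :: "'s::comm_ring_1"
  assumes "g = h" "B = C1 + d*h" "A + d*g = C2" shows "A + B = C1 + C2"
proof -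
  have "A = C2 - d*g" using assms(3) by (simp add: eq_diff_eq)
  then show ?thesis using assms(1,2) by (simp add: algebra_simps)
qed

lemma commL:
  assumes "length cs = length ts" "length ds = length ts"
  shows "lsum (length ts) (\<lambda>ms. TT wL q x ts cs ms * TT wL q y ts ms ds)
       = lsum (length ts) (\<lambda>ms. TT wL q y ts cs ms * TT wL q x ts ms ds)"
proof -
  note E = exchange[of "RL x y" wL x y, OF locL assms]
  have e1: "G2 wL x y ts False False cs False False ds = H2 wL x y ts False False cs False False ds"
    using E[of False False False False] by (simp add: UNIV_bool RL_def idx2_def)
  have e2: "G2 wL x y ts True True cs True True ds = H2 wL x y ts True True cs True True ds"
    using E[of True True True True] by (simp add: UNIV_bool RL_def idx2_def)
  have ea: "G2 wL x y ts False True cs False True ds = (x - y) * H2 wL x y ts True False cs False True ds + H2 wL x y ts True False cs True False ds"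
    using E[of True False False True] by (simp add: UNIV_bool RL_def idx2_def)
  have eb: "(x - y) * G2 wL x y ts False True cs True False ds + G2 wL x y ts True False cs True False ds = H2 wL x y ts False True cs False True ds"
    using E[of False True True False] by (simp add: UNIV_bool RL_def idx2_def)
  have ec: "G2 wL x y ts False True cs True False ds = H2 wL x y ts True False cs False True ds"
    using E[of True False True False] by (simp add: UNIV_bool RL_def idx2_def)
  have "G2 wL x y ts False True cs False True ds + G2 wL x y ts True False cs True False ds
      = H2 wL x y ts False True cs False True ds + H2 wL x y ts True False cs True False ds"
    using comboL[OF ea eb ec] by simp
  from arg_cong[OF this, of "\<lambda>z. q * z"] show ?thesis unfolding TT_G2[where x=x and y=y] TT_H2[where x=x and y=y] using e1 e2 by (simp add: algebra_simps)
qed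

lemma commL':
  assumes "length cs = length ts" "length ds = length ts"
  shows "lsum (length ts) (\<lambda>ms. TT wL' q x ts cs ms * TT wL' q y ts ms ds)
       = lsum (length ts) (\<lambda>ms. TT wL' q y ts cs ms * TT wL' q x ts ms ds)"
proof -
  note E = exchange[of "RL' x y" wL' x y, OF locL' assms]
  have e1: "G2 wL' x y ts False False cs False False ds = H2 wL' x y ts False False cs False False ds"
    using E[of False False False False] by (simp add: UNIV_bool RL'_def idx2_def)
  have e2: "G2 wL' x y ts True True cs True True ds = H2 wL' x y ts True True cs True True ds"
    using E[of True True True True] by (simp add: UNIV_bool RL'_def idx2_def)
  have ea: "G2 wL' x y ts True False cs False True ds = H2 wL' x y ts False True cs True False ds"
    using E[of False True False True] by (simp add: UNIV_bool RL'_def idx2_def)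
  have eb: "G2 wL' x y ts True False cs True False ds = H2 wL' x y ts False True cs False True ds + (y - x) * H2 wL' x y ts False True cs True False ds"
    using E[of False True True False] by (simp add: UNIV_bool RL'_def idx2_def)
  have ec: "G2 wL' x y ts False True cs False True ds + (y - x) * G2 wL' x y ts True False cs False True ds = H2 wL' x y ts True False cs True False ds"
    using E[of True False False True] by (simp add: UNIV_bool RL'_def idx2_def)
  have "G2 wL' x y ts False True cs False True ds + G2 wL' x y ts True False cs True False ds
      = H2 wL' x y ts False True cs False True ds + H2 wL' x y ts True False cs True False ds"
    using comboL'[OF ea eb ec] by simp
  from arg_cong[OF this, of "\<lambda>z. q * z"] show ?thesis unfolding TT_G2[where x=x and y=y] TT_H2[where x=x and y=y] using e1 e2 by (simp add: algebra_simps)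
qed



lemma state_Suc: "state (Suc N) k = odd k # state N (k div 2)"
  unfolding state_def by (simp add: upt_conv_Cons map_Suc_upt[symmetric] bit_0 bit_Suc del: upt_Suc)

lemma length_state[simp]: "length (state N k) = N"
  by (simp add: state_def)

lemma sum_even_odd: "(\<Sum>k<2*n. f k) = (\<Sum>m<n. f (2*m) + f (2*m+1))"
  for f :: "nat \<Rightarrow> 'b::comm_monoid_add"
  by (induction n) (simp_all add: add_ac)

lemma sum_state: "(\<Sum>k<2^N. g (state N k)) = lsum N g"
proof (induction N arbitrary: g)
  case 0 then show ?case by (simp add: state_def)
next
  case (Suc N)
  have "(\<Sum>k<2^Suc N. g (state (Suc N) k)) = (\<Sum>m<2^N. g (False # state N m) + g (True # state N m))"
    by (simp add: sum_even_odd state_Suc)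
  also have "\<dots> = lsum N (\<lambda>l. g (False # l)) + lsum N (\<lambda>l. g (True # l))"
    by (simp add: sum.distrib Suc.IH[of "\<lambda>l. g (False # l)"] Suc.IH[of "\<lambda>l. g (True # l)"])
  also have "\<dots> = lsum (Suc N) g" by (simp add: UNIV_bool)
  finally show ?case .
qed

lemma const_poly_add: "[:a + b:] = [:a:] + [:b:]" by simp

lemma const_poly_sum: "[:sum f A:] = (\<Sum>i\<in>A. [:f i:])"
  by (induction A rule: infinite_finite_induct) (auto simp: const_poly_add)

definition phX :: "'a::comm_ring_1 poly \<Rightarrow> 'a poly poly" where
  "phX p = map_poly (\<lambda>c. [:c:]) p"

lemma coeff_phX[simp]: "coeff (phX p) i = [:coeff p i:]"
  by (simp add: phX_def coeff_map_poly)

lemma phX_add: "phX (p + q) = phX p + phX q"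
  by (rule poly_eqI) simp

lemma phX_mult: "phX (p * q) = phX p * phX q"
  by (rule poly_eqI) (simp add: coeff_mult const_poly_sum mult.commute)

lemma phX_0[simp]: "phX 0 = 0" by (simp add: phX_def)
lemma phX_1[simp]: "phX 1 = 1" by (simp add: phX_def)

lemma mono_gm:
  fixes ph :: "'a::comm_ring_1 poly \<Rightarrow> 's::comm_ring_1"
  assumes hadd: "\<And>a b. ph (a + b) = ph a + ph b"
    and hmul: "\<And>a b. ph (a * b) = ph a * ph b"
    and h0: "ph 0 = 0" and h1: "ph 1 = 1"
    and hw: "\<And>t e c b d. ph (R t $$ (idx2 e c, idx2 b d)) = w x (emb t) e c b d"
  shows "ph (mono R ts a cs b ds) = gm w x (map emb ts) a cs b ds"
proof (induction ts arbitrary: cs b ds)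
  case Nil then show ?case by (cases cs; cases ds) (simp_all add: h0 h1)
next
  case (Cons t ts) then show ?case by (cases cs; cases ds) (simp_all add: UNIV_bool hadd hmul h0 hw)
qed

lemma cX: "coeff a i * coeff b j = coeff (coeff (phX a * [:b:]) i) j"
proof -
  have "phX a * [:b:] = smult b (phX a)" by (simp add: mult.commute)
  then have "coeff (phX a * [:b:]) i = [:coeff a i:] * b" by (simp add: mult.commute)
  then show ?thesis by simp
qed

lemma cY: "coeff a j * coeff b i = coeff (coeff ([:a:] * phX b) i) j"
  by simp

lemma main_generic:
  fixes R :: "'a::comm_ring_1 \<Rightarrow> 'a poly mat"
    and w :: "'a poly poly \<Rightarrow> 'a poly poly \<Rightarrow> bool \<Rightarrow> bool \<Rightarrow> bool \<Rightarrow> bool \<Rightarrow> 'a poly poly"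
  assumes hX: "\<And>t e c b d. phX (R t $$ (idx2 e c, idx2 b d)) = w [:0,1:] [:[:t:]:] e c b d"
    and hY: "\<And>t e c b d. [:R t $$ (idx2 e c, idx2 b d):] = w [:[:0,1:]:] [:[:t:]:] e c b d"
    and comm: "\<And>cs ds. length cs = length ts \<Longrightarrow> length ds = length ts \<Longrightarrow>
       lsum (length ts) (\<lambda>ms. TT w [:[:q:]:] [:0,1:] (map (\<lambda>t. [:[:t:]:]) ts) cs ms * TT w [:[:q:]:] [:[:0,1:]:] (map (\<lambda>t. [:[:t:]:]) ts) ms ds)
     = lsum (length ts) (\<lambda>ms. TT w [:[:q:]:] [:[:0,1:]:] (map (\<lambda>t. [:[:t:]:]) ts) cs ms * TT w [:[:q:]:] [:0,1:] (map (\<lambda>t. [:[:t:]:]) ts) ms ds)"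
  shows "transfer_coeff R q ts i * transfer_coeff R q ts j = transfer_coeff R q ts j * transfer_coeff R q ts i"
proof -
  define N where "N = length ts"
  define n where "n = (2::nat) ^ N"
  define ets where "ets = map (\<lambda>t. [:[:t:]:]) ts"
  define X :: "'a poly poly" where "X = [:0,1:]"
  define Y :: "'a poly poly" where "Y = [:[:0,1:]:]"
  define Q :: "'a poly poly" where "Q = [:[:q:]:]"
  define tp where "tp cs ds = mono R ts False cs False ds + [:q:] * mono R ts True cs True ds" for cs ds
  have tX: "phX (tp cs ds) = TT w Q X ets cs ds" for cs ds
  proof -
    have m: "phX (mono R ts a cs b ds) = gm w X ets a cs b ds" for a b
      unfolding X_def ets_def by (rule mono_gm) (simp_all add: phX_add phX_mult hX)
    have "phX [:q:] = Q" by (rule poly_eqI) (simp add: Q_def coeff_pCons split: nat.split)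
    then show ?thesis by (simp only: tp_def TT_def phX_add phX_mult m)
  qed
  have tY: "[:tp cs ds:] = TT w Q Y ets cs ds" for cs ds
  proof -
    have m: "[:mono R ts a cs b ds:] = gm w Y ets a cs b ds" for a b
      unfolding Y_def ets_def by (rule mono_gm) (simp_all add: hY)
    have cm: "[:a * b:] = [:a:] * [:b:]" for a b :: "'a poly"
      by (metis mult.left_neutral mult_pCons_left mult_zero_left pCons_0_0 smult_pCons smult_0_right add_0_right)
    show ?thesis by (simp only: tp_def TT_def m Q_def cm const_poly_add)
  qed
  have dimT: "dim_row (transfer R q ts) = n" "dim_col (transfer R q ts) = n"
    by (simp_all add: transfer_def opA_def opD_def n_def N_def)
  have ent: "transfer R q ts $$ (r, k) = tp (state N r) (state N k)" if "r < n" "k < n" for r k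
    using that by (simp add: transfer_def opA_def opD_def n_def N_def tp_def)
  have prod: "(transfer_coeff R q ts i1 * transfer_coeff R q ts j1) $$ (r, c)
     = (\<Sum>k<n. coeff (tp (state N r) (state N k)) i1 * coeff (tp (state N k) (state N c)) j1)"
    if "r < n" "c < n" for r c i1 j1
    using that dimT unfolding transfer_coeff_def
    by (simp add: scalar_prod_def ent atLeast0LessThan)
  have cmp: "(\<Sum>k<n. coeff (tp (state N r) (state N k)) i * coeff (tp (state N k) (state N c)) j)
     = (\<Sum>k<n. coeff (tp (state N r) (state N k)) j * coeff (tp (state N k) (state N c)) i)"
    if "r < n" "c < n" for r c
  proof -
    have "(\<Sum>k<n. coeff (tp (state N r) (state N k)) i * coeff (tp (state N k) (state N c)) j)
       = coeff (coeff (\<Sum>k<n. phX (tp (state N r) (state N k)) * [:tp (state N k) (state N c):]) i) j"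
      by (simp only: cX coeff_sum)
    also have "\<dots> = coeff (coeff (lsum N (\<lambda>ms. TT w Q X ets (state N r) ms * TT w Q Y ets ms (state N c))) i) j"
      unfolding tX tY n_def sum_state[of "\<lambda>ms. TT w Q X ets (state N r) ms * TT w Q Y ets ms (state N c)" N, symmetric] ..
    also have "\<dots> = coeff (coeff (lsum N (\<lambda>ms. TT w Q Y ets (state N r) ms * TT w Q X ets ms (state N c))) i) j"
      using comm[of "state N r" "state N c"] by (simp add: N_def Q_def X_def Y_def ets_def)
    also have "\<dots> = coeff (coeff (\<Sum>k<n. [:tp (state N r) (state N k):] * phX (tp (state N k) (state N c))) i) j"
      unfolding tX tY n_def sum_state[of "\<lambda>ms. TT w Q Y ets (state N r) ms * TT w Q X ets ms (state N c)" N, symmetric] ..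
    also have "\<dots> = (\<Sum>k<n. coeff (tp (state N r) (state N k)) j * coeff (tp (state N k) (state N c)) i)"
      by (simp only: cY coeff_sum)
    finally show ?thesis .
  qed
  show ?thesis
  proof (rule eq_matI, goal_cases)
    case (1 r c)
    then have "r < n" "c < n" by (simp_all add: transfer_coeff_def dimT)
    then show ?case by (simp only: prod cmp)
  qed (simp_all add: transfer_coeff_def dimT)
qed



lemma phX_pCons: "phX (pCons a p) = pCons [:a:] (phX p)"
  by (rule poly_eqI) (simp add: coeff_pCons split: nat.split)

lemma hXL: "phX (L_mat t $$ (idx2 e c, idx2 b d)) = wL [:0,1:] [:[:t:]:] e c b d"
  by (cases e; cases c; cases b; cases d)
     (simp_all add: L_mat_def mat_of_rows_list_def idx2_def wL_def phX_pCons)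

lemma hYL: "[:L_mat t $$ (idx2 e c, idx2 b d):] = wL [:[:0,1:]:] [:[:t:]:] e c b d"
  by (cases e; cases c; cases b; cases d)
     (simp_all add: L_mat_def mat_of_rows_list_def idx2_def wL_def)

lemma hXL': "phX (L'_mat t $$ (idx2 e c, idx2 b d)) = wL' [:0,1:] [:[:t:]:] e c b d"
  by (cases e; cases c; cases b; cases d)
     (simp_all add: L'_mat_def mat_of_rows_list_def idx2_def wL'_def phX_pCons)

lemma hYL': "[:L'_mat t $$ (idx2 e c, idx2 b d):] = wL' [:[:0,1:]:] [:[:t:]:] e c b d"
  by (cases e; cases c; cases b; cases d)
     (simp_all add: L'_mat_def mat_of_rows_list_def idx2_def wL'_def)

theorem proposition5p3:
  fixes q :: "'a::comm_ring_1" and ts :: "'a list" and i j :: nat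
  assumes "length ts \<ge> 2"
  shows "transfer_coeff L_mat q ts i * transfer_coeff L_mat q ts j
           = transfer_coeff L_mat q ts j * transfer_coeff L_mat q ts i \<and>
         transfer_coeff L'_mat q ts i * transfer_coeff L'_mat q ts j
           = transfer_coeff L'_mat q ts j * transfer_coeff L'_mat q ts i"
proof
  show "transfer_coeff L_mat q ts i * transfer_coeff L_mat q ts j
           = transfer_coeff L_mat q ts j * transfer_coeff L_mat q ts i"
    by (rule main_generic[where w = wL, OF hXL hYL])
       (use commL[of _ "map (\<lambda>t. [:[:t:]:]) ts"] in simp)
  show "transfer_coeff L'_mat q ts i * transfer_coeff L'_mat q ts j
           = transfer_coeff L'_mat q ts j * transfer_coeff L'_mat q ts i"
    by (rule main_generic[where w = wL', OF hXL' hYL'])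
       (use commL'[of _ "map (\<lambda>t. [:[:t:]:]) ts"] in simp)
qed

end
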